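(* Consider the primal SDP $\tau=\inf\{\sum_{j\in[p]}\langle\mathbf{C}_j,\mathbf{X}_j\rangle:\ \mathbf{X}_j\in\mathcal{S}_j^+\ (j\in[p]),\ \sum_{j\in[p]}\mathcal{A}_j\mathbf{X}_j=\mathbf{b}\}$ and its dual $\rho=\sup\{\mathbf{b}^\top\mathbf{y}:\ \mathbf{y}\in\mathbb{R}^\zeta,\ \mathbf{C}_j-\mathcal{A}_j^\top\mathbf{y}\in\mathcal{S}_j^+\ (j\in[p])\}$. Assume (i) strong duality: $\rho=\tau\in\mathbb{R}$; and (ii) constant trace property: there exist $a_1,\dots,a_p>0$ such that whenever $\mathbf{X}_j\in\mathcal{S}_j$ ($j\in[p]$) satisfy $\sum_{j\in[p]}\mathcal{A}_j\mathbf{X}_j=\mathbf{b}$, then $\mathrm{trace}(\mathbf{X}_j)=a_j$ for all $j\in[p]$. Define $\psi:\mathbb{R}^\zeta\to\mathbb{R}$, $\psi(\mathbf{y}):=\mathbf{b}^\top\mathbf{y}+\sum_{j\in[p]}a_j\lambda_{\min}(\mathbf{C}_j-\mathcal{A}_j^\top\mathbf{y})$. Then $\tau=\sup_{\mathbf{y}\in\mathbb{R}^\zeta}\psi(\mathbf{y})$. Moreover, if the dual SDP has an optimal solution, then $\sup_{\mathbf{y}\in\mathbb{R}^\zeta}\psi(\mathbf{y})$ is attained.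
   Context: For $j\in[p]$, $\mathcal{S}_j$ is the space of real symmetric block-diagonal matrices $\mathrm{diag}(\mathbf{X}_{1,j},\dots,\mathbf{X}_{\omega_j,j})$ with fixed block sizes $s^{(1,j)},\dots,s^{(\omega_j,j)}\ge1$, with inner product $\langle\mathbf{A},\mathbf{B}\rangle=\mathrm{trace}(\mathbf{B}^\top\mathbf{A})$, and $\mathcal{S}_j^+$ is the set of positive semidefinite elements of $\mathcal{S}_j$. Given $\mathbf{C}_j\in\mathcal{S}_j$, $\mathbf{A}_{i,j}\in\mathcal{S}_j$ ($i\in[\zeta]$) and $\mathbf{b}\in\mathbb{R}^\zeta$: $\mathcal{A}_j\mathbf{X}:=(\langle\mathbf{A}_{1,j},\mathbf{X}\rangle,\dots,\langle\mathbf{A}_{\zeta,j},\mathbf{X}\rangle)$ and its adjoint $\mathcal{A}_j^\top\mathbf{z}:=\sum_{i\in[\zeta]}z_i\mathbf{A}_{i,j}$. $\lambda_{\min}$ denotes the smallest eigenvalue of a real symmetric matrix. *)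

theory Defs
  imports "Jordan_Normal_Form.Char_Poly" "HOL-Library.Extended_Real"
begin

definition blk_start :: "nat list \<Rightarrow> nat \<Rightarrow> nat" where
  "blk_start bs k = sum_list (take k bs)"

definition same_block :: "nat list \<Rightarrow> nat \<Rightarrow> nat \<Rightarrow> bool" where
  "same_block bs r c = (\<exists>k<length bs. blk_start bs k \<le> r \<and> r < blk_start bs (Suc k)
                                    \<and> blk_start bs k \<le> c \<and> c < blk_start bs (Suc k))"

definition bdsym :: "nat list \<Rightarrow> real mat set" where
  "bdsym bs = {X \<in> carrier_mat (sum_list bs) (sum_list bs).
      transpose_mat X = X \<and>
      (\<forall>r<sum_list bs. \<forall>c<sum_list bs. \<not> same_block bs r c \<longrightarrow> X $$ (r, c) = 0)}"

definition psd_mat :: "real mat \<Rightarrow> bool" where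
  "psd_mat X = (\<forall>v \<in> carrier_vec (dim_row X). v \<bullet> (X *\<^sub>v v) \<ge> 0)"

definition bdpsd :: "nat list \<Rightarrow> real mat set" where
  "bdpsd bs = {X \<in> bdsym bs. psd_mat X}"

definition mtrace :: "real mat \<Rightarrow> real" where
  "mtrace X = (\<Sum>i<dim_row X. X $$ (i, i))"

definition minner :: "real mat \<Rightarrow> real mat \<Rightarrow> real" where
  "minner A B = mtrace (transpose_mat B * A)"

(* adjoint A_j^T z = sum_i z_i A_{i,j}, with Aj i = A_{i,j} of size n x n *)
definition adjA :: "nat \<Rightarrow> nat \<Rightarrow> (nat \<Rightarrow> real mat) \<Rightarrow> real vec \<Rightarrow> real mat" where
  "adjA \<zeta> n Aj z = mat n n (\<lambda>(r, c). \<Sum>i<\<zeta>. z $ i * Aj i $$ (r, c))"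

definition lambda_min :: "real mat \<Rightarrow> real" where
  "lambda_min M = Min {k. eigenvalue M k}"

end

theory Submission
  imports Defs "HOL-Analysis.Function_Topology"
begin

definition BF :: "nat \<Rightarrow> (nat \<Rightarrow> nat \<Rightarrow> real) \<Rightarrow> (nat \<Rightarrow> real) \<Rightarrow> (nat \<Rightarrow> real) \<Rightarrow> real" where
  "BF n F x y = (\<Sum>i<n. \<Sum>k<n. x i * F i k * y k)"

lemma BF_add_left: "BF n F (\<lambda>i. x i + z i) y = BF n F x y + BF n F z y"
  unfolding BF_def by (simp add: algebra_simps sum.distrib)
lemma BF_add_right: "BF n F x (\<lambda>i. y i + z i) = BF n F x y + BF n F x z"
  unfolding BF_def by (simp add: algebra_simps sum.distrib)
lemma BF_scale_left: "BF n F (\<lambda>i. t * x i) y = t * BF n F x y"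
  unfolding BF_def by (simp add: algebra_simps sum_distrib_left)
lemma BF_scale_right: "BF n F x (\<lambda>i. t * y i) = t * BF n F x y"
  unfolding BF_def by (simp add: algebra_simps sum_distrib_left)

lemma BF_expand: "BF n F (\<lambda>i. x i + t * y i) (\<lambda>i. x i + t * y i)
   = BF n F x x + t * (BF n F x y + BF n F y x) + t^2 * BF n F y y"
  by (simp add: BF_add_left BF_add_right BF_scale_left BF_scale_right algebra_simps power2_eq_square)

lemma BF_sym: assumes "\<And>i k. i < n \<Longrightarrow> k < n \<Longrightarrow> F i k = F k i"
  shows "BF n F x y = BF n F y x"
  unfolding BF_def
  apply (subst sum.swap)
  by (intro sum.cong refl, simp add: assms mult.commute mult.left_commute)

lemma BF_row: "BF n F y x = (\<Sum>i<n. y i * (\<Sum>k<n. F i k * x k))"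
  unfolding BF_def by (simp add: sum_distrib_left mult.assoc)

lemma BF_unit_left: assumes "a < n" shows "BF n F (\<lambda>i. if i = a then 1 else 0) y = (\<Sum>k<n. F a k * y k)"
proof -
  have "(\<Sum>i<n. (if i = a then 1 else 0) * (\<Sum>k<n. F i k * y k)) = (\<Sum>i<n. if i = a then (\<Sum>k<n. F i k * y k) else 0)"
    by (intro sum.cong) auto
  then show ?thesis unfolding BF_row using assms by simp
qed

lemma BF_unit_right: assumes "a < n" shows "BF n F x (\<lambda>i. if i = a then 1 else 0) = (\<Sum>i<n. x i * F i a)"
proof -
  have "(\<Sum>i<n. \<Sum>k<n. x i * F i k * (if k = a then 1 else 0)) = (\<Sum>i<n. \<Sum>k<n. if k = a then x i * F i k else 0)"
    by (intro sum.cong) auto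
  then show ?thesis unfolding BF_def using assms by simp
qed

lemma lin_nonneg_zero: fixes a b :: real assumes "\<And>t. a + t * b \<ge> 0" shows "b = 0"
proof (rule ccontr)
  assume "b \<noteq> 0"
  have "a + (-(\<bar>a\<bar>+1)/b) * b \<ge> 0" by (rule assms)
  moreover have "(-(\<bar>a\<bar>+1)/b) * b = -(\<bar>a\<bar>+1)" using \<open>b \<noteq> 0\<close> by simp
  ultimately show False by linarith
qed

definition psdF :: "nat \<Rightarrow> (nat \<Rightarrow> nat \<Rightarrow> real) \<Rightarrow> bool" where
  "psdF n F = (\<forall>z. BF n F z z \<ge> 0)"
definition symF :: "nat \<Rightarrow> (nat \<Rightarrow> nat \<Rightarrow> real) \<Rightarrow> bool" where
  "symF n F = (\<forall>i<n. \<forall>k<n. F i k = F k i)"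
definition TR :: "nat \<Rightarrow> (nat \<Rightarrow> nat \<Rightarrow> real) \<Rightarrow> (nat \<Rightarrow> nat \<Rightarrow> real) \<Rightarrow> real" where
  "TR n P X = (\<Sum>i<n. \<Sum>j<n. P i j * X j i)"

definition uv :: "nat \<Rightarrow> nat \<Rightarrow> real" where "uv a = (\<lambda>i. if i = a then 1 else 0)"

lemma BF_uv_uv: assumes "a < n" "b < n" shows "BF n F (uv a) (uv b) = F a b"
proof -
  have "BF n F (uv a) (uv b) = (\<Sum>k<n. F a k * uv b k)" unfolding uv_def by (rule BF_unit_left[OF assms(1)])
  also have "\<dots> = (\<Sum>k<n. if k = b then F a k else 0)" by (intro sum.cong) (auto simp: uv_def)
  finally show ?thesis using assms by simp
qed

lemma BF_uv_left: "a < n \<Longrightarrow> BF n F (uv a) y = (\<Sum>k<n. F a k * y k)"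
  unfolding uv_def by (rule BF_unit_left)
lemma BF_uv_right: "a < n \<Longrightarrow> BF n F x (uv a) = (\<Sum>i<n. x i * F i a)"
  unfolding uv_def by (rule BF_unit_right)

lemma trace_nonneg_aux:
  assumes P: "psdF n P"
  shows "symF n X \<Longrightarrow> psdF n X \<Longrightarrow> (\<forall>i<n. \<forall>j<n. (i < k \<or> j < k) \<longrightarrow> X i j = 0) \<Longrightarrow> TR n P X \<ge> 0"
proof (induction "n - k" arbitrary: k X)
  case 0
  then have "\<forall>i<n. \<forall>j<n. X i j = 0" by auto
  then show ?case unfolding TR_def by simp
next
  case (Suc d)
  note sym = Suc.prems(1) and psd = Suc.prems(2) and zer = Suc.prems(3)
  have kn: "k < n" using Suc.hyps(2) by simp
  have d: "d = n - Suc k" using Suc.hyps(2) by simp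
  define c where "c = X k k"
  have c0: "c \<ge> 0" using psd BF_uv_uv[OF kn kn, of X] unfolding psdF_def c_def by metis
  show ?case
  proof (cases "c = 0")
    case True
    have rowk: "X k j = 0" if j: "j < n" for j
    proof -
      have e: "\<And>t. BF n X (uv j) (uv j) + t * (BF n X (uv j) (uv k) + BF n X (uv k) (uv j)) + t^2 * BF n X (uv k) (uv k) \<ge> 0"
        using psd BF_expand[of n X "uv j" _ "uv k"] unfolding psdF_def by metis
      have "BF n X (uv j) (uv k) + BF n X (uv k) (uv j) = 0"
        apply (rule lin_nonneg_zero[of "BF n X (uv j) (uv j)"])
        using e[unfolded BF_uv_uv[OF kn kn]] True c_def by simp
      then show ?thesis using BF_uv_uv[OF j kn, of X] BF_uv_uv[OF kn j, of X] sym j kn unfolding symF_def by auto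
    qed
    have "\<forall>i<n. \<forall>j<n. (i < Suc k \<or> j < Suc k) \<longrightarrow> X i j = 0"
    proof (intro allI impI)
      fix i j assume ij: "i < n" "j < n" "i < Suc k \<or> j < Suc k"
      show "X i j = 0"
      proof (cases "i < k \<or> j < k")
        case True then show ?thesis using zer ij by auto
      next
        case False
        then have "i = k \<or> j = k" using ij by auto
        then show ?thesis using rowk ij sym kn unfolding symF_def by metis
      qed
    qed
    then show ?thesis using Suc.hyps(1)[OF d sym psd] by blast
  next
    case False
    then have cpos: "c > 0" using c0 by simp
    define X' where "X' = (\<lambda>i j. X i j - X i k * X k j / c)"
    have symX': "symF n X'" using sym kn unfolding symF_def X'_def by (auto simp: mult.commute)
    have BFX': "BF n X' z z = BF n X z z - (\<Sum>i<n. z i * X i k)^2 / c" for z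
    proof -
      have "BF n X' z z = BF n X z z - (\<Sum>i<n. \<Sum>j<n. (z i * X i k) * (X k j * z j)) / c"
        unfolding BF_def X'_def by (simp add: algebra_simps sum_subtractf sum_divide_distrib)
      also have "(\<Sum>i<n. \<Sum>j<n. (z i * X i k) * (X k j * z j)) = (\<Sum>i<n. z i * X i k) * (\<Sum>j<n. X k j * z j)"
        by (simp add: sum_product)
      also have "(\<Sum>j<n. X k j * z j) = (\<Sum>i<n. z i * X i k)"
        using sym kn unfolding symF_def by (intro sum.cong) (auto simp: mult.commute)
      finally show ?thesis by (simp add: power2_eq_square)
    qed
    have psdX': "psdF n X'"
      unfolding psdF_def
    proof
      fix z
      define s where "s = (\<Sum>i<n. z i * X i k)"
      have s2: "(\<Sum>j<n. X k j * z j) = s"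
        unfolding s_def using sym kn unfolding symF_def by (intro sum.cong) (auto simp: mult.commute)
      have "BF n X z z + (-s/c) * (BF n X z (uv k) + BF n X (uv k) z) + (-s/c)^2 * BF n X (uv k) (uv k) \<ge> 0"
        using psd BF_expand[of n X z _ "uv k"] unfolding psdF_def by metis
      then have "BF n X z z + (-s/c) * (2*s) + (-s/c)^2 * c \<ge> 0"
        using BF_uv_uv[OF kn kn, of X] BF_uv_left[OF kn, where F=X and y=z] BF_uv_right[OF kn, where F=X and x=z] s2
        unfolding s_def c_def by simp
      moreover have "(-s/c) * (2*s) + (-s/c)^2 * c = -((s^2) / c)" using cpos
        by (simp add: field_simps power2_eq_square)
      ultimately show "BF n X' z z \<ge> 0" unfolding BFX' s_def by linarith
    qed
    have zerX': "\<forall>i<n. \<forall>j<n. (i < Suc k \<or> j < Suc k) \<longrightarrow> X' i j = 0"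
    proof (intro allI impI)
      fix i j assume ij: "i < n" "j < n" "i < Suc k \<or> j < Suc k"
      show "X' i j = 0"
      proof (cases "i < k \<or> j < k")
        case True
        then show ?thesis using zer ij kn unfolding X'_def by auto
      next
        case False
        then have "i = k \<or> j = k" using ij by auto
        then show ?thesis using cpos sym ij kn unfolding X'_def c_def symF_def by auto
      qed
    qed
    have IH: "TR n P X' \<ge> 0" using Suc.hyps(1)[OF d symX' psdX' zerX'] .
    define x where "x = (\<lambda>i. X i k)"
    have "TR n P X = TR n P X' + (\<Sum>i<n. \<Sum>j<n. P i j * (X j k * X k i)) / c"
      unfolding TR_def X'_def by (simp add: algebra_simps sum_subtractf sum_divide_distrib)
    also have "(\<Sum>i<n. \<Sum>j<n. P i j * (X j k * X k i)) = BF n P x x"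
      unfolding BF_def x_def using sym kn unfolding symF_def
      by (intro sum.cong refl) (auto simp: mult.commute mult.left_commute)
    finally have "TR n P X = TR n P X' + BF n P x x / c" .
    moreover have "BF n P x x \<ge> 0" using P unfolding psdF_def by blast
    ultimately show ?thesis using IH cpos by simp
  qed
qed

lemma trace_nonneg: "psdF n P \<Longrightarrow> symF n X \<Longrightarrow> psdF n X \<Longrightarrow> TR n P X \<ge> 0"
  using trace_nonneg_aux[of n P X 0] by simp

lemma coord_cont[continuous_intros]: "continuous_on S (\<lambda>x::nat \<Rightarrow> real. x i)"
  by (rule continuous_on_subset[OF continuous_on_product_coordinates]) auto

lemma BF_cong: "(\<And>i. i < n \<Longrightarrow> x i = x' i) \<Longrightarrow> (\<And>i. i < n \<Longrightarrow> y i = y' i) \<Longrightarrow> BF n F x y = BF n F x' y'"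
  unfolding BF_def by (intro sum.cong refl) auto

lemma min_exists:
  fixes M :: "nat \<Rightarrow> nat \<Rightarrow> real"
  assumes n: "n > 0"
  shows "\<exists>f0. (\<Sum>i<n. (f0 i)^2) = 1 \<and> (\<forall>f. BF n M f f \<ge> BF n M f0 f0 * (\<Sum>i<n. (f i)^2))"
proof -
  define B where "B = (\<lambda>i. if i < n then {-1..1::real} else {0})"
  define S where "S = PiE UNIV B \<inter> {f. (\<Sum>i<n. (f i)^2) = 1}"
  have "compactin (product_topology (\<lambda>i. euclidean) UNIV) (PiE UNIV B)"
    unfolding compactin_PiE B_def by auto
  then have c1: "compact (PiE UNIV B)" unfolding euclidean_product_topology by simp
  have c2: "closed {f::nat\<Rightarrow>real. (\<Sum>i<n. (f i)^2) = 1}"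
    by (rule closed_Collect_eq) (intro continuous_intros)+
  have cS: "compact S" unfolding S_def using c1 c2 by blast
  have "(\<lambda>i. if i = 0 then 1 else 0) \<in> S" unfolding S_def B_def using n
    by (auto simp: PiE_iff if_distrib[where f="\<lambda>x. x^2"] cong: if_cong)
  then have neS: "S \<noteq> {}" by blast
  have cont: "continuous_on S (\<lambda>f. BF n M f f)" unfolding BF_def by (intro continuous_intros)
  obtain f0 where f0S: "f0 \<in> S" and f0min: "\<forall>g\<in>S. BF n M f0 f0 \<le> BF n M g g"
    using continuous_attains_inf[OF cS neS cont] by blast
  have s0: "(\<Sum>i<n. (f0 i)^2) = 1" using f0S unfolding S_def by auto
  have "BF n M f f \<ge> BF n M f0 f0 * (\<Sum>i<n. (f i)^2)" for f
  proof (cases "(\<Sum>i<n. (f i)^2) = 0")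
    case True
    then have "\<forall>i\<in>{..<n}. (f i)^2 = 0" by (subst sum_nonneg_eq_0_iff[symmetric]) auto
    then have "BF n M f f = BF n M (\<lambda>i. 0) (\<lambda>i. 0)" by (intro BF_cong) auto
    then show ?thesis using True unfolding BF_def by simp
  next
    case False
    define s where "s = (\<Sum>i<n. (f i)^2)"
    have spos: "s > 0" using False unfolding s_def by (simp add: sum_nonneg order_le_neq_trans)
    define g where "g = (\<lambda>i. if i < n then (1 / sqrt s) * f i else 0)"
    have gi: "(g i)^2 = (f i)^2 / s" if "i < n" for i
      using that spos unfolding g_def by (simp add: power_mult_distrib power_divide)
    have "g \<in> S"
    proof -
      have "(\<Sum>i<n. (g i)^2) = (\<Sum>i<n. (f i)^2 / s)" by (intro sum.cong) (auto simp: gi)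
      also have "\<dots> = 1" using spos unfolding s_def[symmetric] sum_divide_distrib[symmetric] by simp
      finally have sum1: "(\<Sum>i<n. (g i)^2) = 1" .
      have "g i \<in> B i" for i
      proof (cases "i < n")
        case True
        have "(f i)^2 \<le> s" unfolding s_def using True by (intro member_le_sum) auto
        then have "(g i)^2 \<le> 1" using gi[OF True] spos by simp
        then have "\<bar>g i\<bar> \<le> 1" by (simp add: abs_square_le_1)
        then show ?thesis using True unfolding B_def by auto
      qed (auto simp: g_def B_def)
      then show ?thesis unfolding S_def using sum1 by auto
    qed
    then have "BF n M f0 f0 \<le> BF n M g g" using f0min by blast
    also have "BF n M g g = BF n M (\<lambda>i. (1 / sqrt s) * f i) (\<lambda>i. (1 / sqrt s) * f i)"
      by (intro BF_cong) (auto simp: g_def)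
    also have "\<dots> = (1 / sqrt s) * ((1 / sqrt s) * BF n M f f)"
      by (simp only: BF_scale_left BF_scale_right)
    also have "\<dots> = BF n M f f / s"
    proof -
      have "sqrt s * sqrt s = s" using spos by simp
      then show ?thesis using spos by (simp add: field_simps)
    qed
    finally show ?thesis using spos unfolding s_def[symmetric] by (simp add: field_simps)
  qed
  then show ?thesis using s0 by blast
qed

lemma quad_zero: fixes a c :: real assumes "c \<ge> 0" "\<And>t. t * (2*a) + t^2 * c \<ge> 0" shows "a = 0"
proof -
  define t where "t = - a / (c+1)"
  have ht: "t * (c+1) = -a" using assms(1) unfolding t_def by simp
  have "(c+1)^2 * (t * (2*a) + t^2 * c) = 2*a*(t*(c+1))*(c+1) + (t*(c+1))^2*c"
    by (simp add: algebra_simps power2_eq_square)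
  also have "\<dots> = -(a^2) * (c+2)" unfolding ht by (simp add: algebra_simps power2_eq_square)
  finally have "(c+1)^2 * (t * (2*a) + t^2 * c) = -(a^2) * (c+2)" .
  moreover have "(c+1)^2 * (t * (2*a) + t^2 * c) \<ge> 0" using assms by simp
  ultimately have "a^2 * (c+2) \<le> 0" by linarith
  then have "a^2 \<le> 0" using assms(1) by (simp add: mult_le_0_iff)
  then show ?thesis by simp
qed

lemma lagrange:
  fixes M :: "nat \<Rightarrow> nat \<Rightarrow> real"
  assumes sym: "symF n M" and s0: "(\<Sum>i<n. (f0 i)^2) = 1"
    and mn: "\<forall>f. BF n M f f \<ge> BF n M f0 f0 * (\<Sum>i<n. (f i)^2)"
  shows "\<forall>i<n. (\<Sum>k<n. M i k * f0 k) = BF n M f0 f0 * f0 i"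
proof -
  define \<mu> where "\<mu> = BF n M f0 f0"
  define N where "N = (\<lambda>i k. M i k - \<mu> * (if i = k then 1 else 0))"
  have BFN: "BF n N x y = BF n M x y - \<mu> * (\<Sum>i<n. x i * y i)" for x y
  proof -
    have e: "x i * N i k * y k = x i * M i k * y k - (if i = k then \<mu> * (x i * y i) else 0)" for i k
      by (auto simp: N_def algebra_simps)
    have "BF n N x y = BF n M x y - (\<Sum>i<n. \<Sum>k<n. if i = k then \<mu> * (x i * y i) else 0)"
      unfolding BF_def e by (simp add: sum_subtractf)
    also have "(\<Sum>i<n. \<Sum>k<n. if i = k then \<mu> * (x i * y i) else 0) = \<mu> * (\<Sum>i<n. x i * y i)"
      by (simp add: sum_distrib_left)
    finally show ?thesis .
  qed
  have Npsd: "BF n N f f \<ge> 0" for f using mn unfolding BFN \<mu>_def by (simp add: power2_eq_square)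
  have N0: "BF n N f0 f0 = 0" unfolding BFN \<mu>_def using s0 by (simp add: power2_eq_square)
  have symN: "symF n N" using sym unfolding symF_def N_def by auto
  define r where "r = (\<lambda>i. \<Sum>k<n. N i k * f0 k)"
  have r_eq: "r i = (\<Sum>k<n. M i k * f0 k) - \<mu> * f0 i" if "i < n" for i
  proof -
    have "r i = (\<Sum>k<n. M i k * f0 k) - (\<Sum>k<n. if i = k then \<mu> * f0 k else 0)"
    proof -
      have e: "N i k * f0 k = M i k * f0 k - (if i = k then \<mu> * f0 k else 0)" for k
        by (auto simp: N_def algebra_simps)
      show ?thesis unfolding r_def e by (simp add: sum_subtractf)
    qed
    then show ?thesis using that by simp
  qed
  have a1: "BF n N r f0 = (\<Sum>i<n. (r i)^2)" unfolding BF_row r_def by (simp add: power2_eq_square)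
  have a2: "BF n N f0 r = (\<Sum>i<n. (r i)^2)" using a1 BF_sym[of n N] symN unfolding symF_def by metis
  have "\<And>t. t * (2 * (\<Sum>i<n. (r i)^2)) + t^2 * BF n N r r \<ge> 0"
  proof -
    fix t
    have "BF n N (\<lambda>i. f0 i + t * r i) (\<lambda>i. f0 i + t * r i) \<ge> 0" by (rule Npsd)
    then show "t * (2 * (\<Sum>i<n. (r i)^2)) + t^2 * BF n N r r \<ge> 0"
      unfolding BF_expand N0 a1 a2 by simp
  qed
  then have "(\<Sum>i<n. (r i)^2) = 0" using quad_zero[OF Npsd] by blast
  then have "\<forall>i\<in>{..<n}. (r i)^2 = 0" by (subst sum_nonneg_eq_0_iff[symmetric]) auto
  then show ?thesis using r_eq unfolding \<mu>_def by auto
qed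

definition ent :: "real mat \<Rightarrow> nat \<Rightarrow> nat \<Rightarrow> real" where "ent M = (\<lambda>i k. M $$ (i, k))"

lemma row_scalar: assumes "M \<in> carrier_mat n n" "v \<in> carrier_vec n" "i < n"
  shows "(M *\<^sub>v v) $ i = (\<Sum>k<n. M $$ (i, k) * v $ k)"
  using assms by (simp add: scalar_prod_def atLeast0LessThan)

lemma quad_vec: assumes M: "M \<in> carrier_mat n n" and v: "v \<in> carrier_vec n"
  shows "v \<bullet> (M *\<^sub>v v) = BF n (ent M) (\<lambda>i. v $ i) (\<lambda>i. v $ i)"
proof -
  have "v \<bullet> (M *\<^sub>v v) = (\<Sum>i<n. v $ i * (M *\<^sub>v v) $ i)"
    using M by (simp add: scalar_prod_def atLeast0LessThan)
  also have "\<dots> = (\<Sum>i<n. v $ i * (\<Sum>k<n. M $$ (i, k) * v $ k))"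
    using row_scalar[OF M v] by (intro sum.cong) auto
  finally show ?thesis unfolding BF_row ent_def .
qed

lemma self_scalar: "(v :: real vec) \<in> carrier_vec n \<Longrightarrow> v \<bullet> v = (\<Sum>i<n. (v $ i)^2)"
  by (simp add: scalar_prod_def atLeast0LessThan power2_eq_square)

lemma vec_nonzero_pos: fixes v :: "real vec" assumes v: "v \<in> carrier_vec n" and nz: "v \<noteq> 0\<^sub>v n"
  shows "(\<Sum>i<n. (v $ i)^2) > 0"
proof (rule ccontr)
  assume "\<not> ?thesis"
  then have "(\<Sum>i<n. (v $ i)^2) = 0" using sum_nonneg[of "{..<n}" "\<lambda>i. (v $ i)^2"] by simp
  then have "\<forall>i\<in>{..<n}. (v $ i)^2 = 0" by (subst sum_nonneg_eq_0_iff[symmetric]) auto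
  then have "v = 0\<^sub>v n" using v by (intro eq_vecI) auto
  with nz show False by simp
qed

lemma sym_spectral:
  assumes M: "M \<in> carrier_mat n n" and n: "n > 0" and sym: "\<forall>i<n. \<forall>k<n. M $$ (i, k) = M $$ (k, i)"
  shows "eigenvalue M (lambda_min M) \<and> (\<forall>f. BF n (ent M) f f \<ge> lambda_min M * (\<Sum>i<n. (f i)^2))"
proof -
  obtain f0 where s0: "(\<Sum>i<n. (f0 i)^2) = 1" and mn: "\<forall>f. BF n (ent M) f f \<ge> BF n (ent M) f0 f0 * (\<Sum>i<n. (f i)^2)"
    using min_exists[OF n, of "ent M"] by blast
  define \<mu> where "\<mu> = BF n (ent M) f0 f0"
  have symE: "symF n (ent M)" using sym unfolding symF_def ent_def by auto
  have lag: "\<forall>i<n. (\<Sum>k<n. M $$ (i, k) * f0 k) = \<mu> * f0 i"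
    using lagrange[OF symE s0 mn] unfolding \<mu>_def ent_def by simp
  define v0 where "v0 = vec n f0"
  have v0c: "v0 \<in> carrier_vec n" unfolding v0_def by simp
  have "v0 \<noteq> 0\<^sub>v n"
  proof
    assume "v0 = 0\<^sub>v n"
    then have "\<forall>i<n. f0 i = 0" unfolding v0_def by (metis index_vec index_zero_vec(1))
    then have "(\<Sum>i<n. (f0 i)^2) = 0" by simp
    with s0 show False by simp
  qed
  moreover have "M *\<^sub>v v0 = \<mu> \<cdot>\<^sub>v v0"
  proof (rule eq_vecI)
    show "dim_vec (M *\<^sub>v v0) = dim_vec (\<mu> \<cdot>\<^sub>v v0)" using M v0c by simp
    fix i assume "i < dim_vec (\<mu> \<cdot>\<^sub>v v0)"
    then have i: "i < n" using v0c by simp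
    have "(M *\<^sub>v v0) $ i = (\<Sum>k<n. M $$ (i, k) * f0 k)"
      using row_scalar[OF M v0c i] unfolding v0_def by simp
    then show "(M *\<^sub>v v0) $ i = (\<mu> \<cdot>\<^sub>v v0) $ i" using lag i unfolding v0_def by simp
  qed
  ultimately have ev: "eigenvalue M \<mu>" unfolding eigenvalue_def eigenvector_def using M v0c by auto
  have ge: "k \<ge> \<mu>" if ek: "eigenvalue M k" for k
  proof -
    obtain v where "eigenvector M v k" using ek unfolding eigenvalue_def by auto
    then have v: "v \<in> carrier_vec n" "v \<noteq> 0\<^sub>v n" "M *\<^sub>v v = k \<cdot>\<^sub>v v"
      using M unfolding eigenvector_def by auto
    have "v \<bullet> (M *\<^sub>v v) = k * (v \<bullet> v)" using v(1,3) by simp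
    also have "v \<bullet> v = (\<Sum>i<n. (v $ i)^2)" using self_scalar[OF v(1)] .
    finally have "k * (\<Sum>i<n. (v $ i)^2) \<ge> \<mu> * (\<Sum>i<n. (v $ i)^2)"
      using mn quad_vec[OF M v(1)] unfolding \<mu>_def by metis
    then show ?thesis using vec_nonzero_pos[OF v(1,2)] by simp
  qed
  have fin: "finite {k. eigenvalue M k}"
  proof -
    have "char_poly M \<noteq> 0" using degree_monic_char_poly[OF M] by auto
    then have "finite {k. poly (char_poly M) k = 0}" by (rule poly_roots_finite)
    then show ?thesis using eigenvalue_root_char_poly[OF M] by simp
  qed
  have "lambda_min M = \<mu>" unfolding lambda_min_def
    by (rule Min_eqI[OF fin]) (use ge ev in auto)
  then show ?thesis using ev mn unfolding \<mu>_def by simp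
qed

lemma BF_shift: "BF n (\<lambda>i k. F i k - \<mu> * (if i = k then 1 else 0)) x y = BF n F x y - \<mu> * (\<Sum>i<n. x i * y i)"
proof -
  have e: "x i * (F i k - \<mu> * (if i = k then 1 else 0)) * y k = x i * F i k * y k - (if i = k then \<mu> * (x i * y i) else 0)" for i k
    by (auto simp: algebra_simps)
  have "BF n (\<lambda>i k. F i k - \<mu> * (if i = k then 1 else 0)) x y = BF n F x y - (\<Sum>i<n. \<Sum>k<n. if i = k then \<mu> * (x i * y i) else 0)"
    unfolding BF_def e by (simp add: sum_subtractf)
  also have "(\<Sum>i<n. \<Sum>k<n. if i = k then \<mu> * (x i * y i) else 0) = \<mu> * (\<Sum>i<n. x i * y i)"
    by (simp add: sum_distrib_left)
  finally show ?thesis .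
qed

lemma minner_eq: assumes "A \<in> carrier_mat n n" "X \<in> carrier_mat n n"
  shows "minner A X = (\<Sum>i<n. \<Sum>k<n. X $$ (k, i) * A $$ (k, i))"
  unfolding minner_def mtrace_def using assms
  by (simp add: scalar_prod_def atLeast0LessThan)

lemma mtrace_eq: "X \<in> carrier_mat n n \<Longrightarrow> mtrace X = (\<Sum>i<n. X $$ (i, i))"
  unfolding mtrace_def by simp

lemma psd_conv: assumes X: "X \<in> carrier_mat n n" and p: "psd_mat X" shows "psdF n (ent X)"
  unfolding psdF_def
proof
  fix z
  have "vec n z \<bullet> (X *\<^sub>v vec n z) \<ge> 0" using p X unfolding psd_mat_def by simp
  also have "vec n z \<bullet> (X *\<^sub>v vec n z) = BF n (ent X) (\<lambda>i. vec n z $ i) (\<lambda>i. vec n z $ i)"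
    by (rule quad_vec[OF X]) simp
  also have "\<dots> = BF n (ent X) z z" by (intro BF_cong) auto
  finally show "BF n (ent X) z z \<ge> 0" .
qed

lemma key_ineq:
  assumes M: "M \<in> carrier_mat n n" and n: "n > 0" and sym: "\<forall>i<n. \<forall>k<n. M $$ (i, k) = M $$ (k, i)"
    and X: "X \<in> carrier_mat n n" and symX: "\<forall>i<n. \<forall>k<n. X $$ (i, k) = X $$ (k, i)" and pX: "psd_mat X"
  shows "minner M X \<ge> lambda_min M * mtrace X"
proof -
  define l where "l = lambda_min M"
  define P where "P = (\<lambda>i k. ent M i k - l * (if i = k then 1 else 0))"
  have "psdF n P" unfolding psdF_def P_def BF_shift
    using sym_spectral[OF M n sym] unfolding l_def by (simp add: power2_eq_square)
  moreover have "symF n (ent X)" using symX unfolding symF_def ent_def by auto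
  ultimately have "TR n P (ent X) \<ge> 0" using trace_nonneg psd_conv[OF X pX] by blast
  moreover have "TR n P (ent X) = (\<Sum>i<n. \<Sum>j<n. M $$ (i, j) * X $$ (j, i)) - l * (\<Sum>i<n. X $$ (i, i))"
  proof -
    have e: "P i j * ent X j i = M $$ (i, j) * X $$ (j, i) - (if i = j then l * X $$ (i, i) else 0)" for i j
      unfolding P_def ent_def by (auto simp: algebra_simps)
    show ?thesis unfolding TR_def e by (simp add: sum_subtractf sum_distrib_left)
  qed
  moreover have "(\<Sum>i<n. \<Sum>j<n. M $$ (i, j) * X $$ (j, i)) = minner M X"
  proof -
    have "(\<Sum>i<n. \<Sum>j<n. M $$ (i, j) * X $$ (j, i)) = (\<Sum>j<n. \<Sum>i<n. M $$ (i, j) * X $$ (j, i))"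
      by (rule sum.swap)
    also have "\<dots> = (\<Sum>i<n. \<Sum>k<n. X $$ (k, i) * M $$ (k, i))"
      using symX by (intro sum.cong refl) (auto simp: mult.commute)
    finally show ?thesis using minner_eq[OF M X] by simp
  qed
  ultimately show ?thesis using mtrace_eq[OF X] unfolding l_def by simp
qed

lemma psd_lmin: assumes M: "M \<in> carrier_mat n n" and n: "n > 0" and sym: "\<forall>i<n. \<forall>k<n. M $$ (i, k) = M $$ (k, i)"
  and p: "psd_mat M" shows "lambda_min M \<ge> 0"
proof -
  have "eigenvalue M (lambda_min M)" using sym_spectral[OF M n sym] by simp
  then obtain v where "eigenvector M v (lambda_min M)" unfolding eigenvalue_def by auto
  then have v: "v \<in> carrier_vec n" "v \<noteq> 0\<^sub>v n" "M *\<^sub>v v = lambda_min M \<cdot>\<^sub>v v"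
    using M unfolding eigenvector_def by auto
  have "\<forall>v\<in>carrier_vec n. 0 \<le> v \<bullet> (M *\<^sub>v v)" using p M unfolding psd_mat_def by simp
  then have "v \<bullet> (M *\<^sub>v v) \<ge> 0" using v(1) by blast
  moreover have "v \<bullet> (M *\<^sub>v v) = lambda_min M * (\<Sum>i<n. (v $ i)^2)" using v(1,3) self_scalar[OF v(1)] by simp
  ultimately show ?thesis using vec_nonzero_pos[OF v(1,2)] by (simp add: zero_le_mult_iff)
qed

lemma adj_minner:
  assumes C: "C \<in> carrier_mat n n" and Aj: "\<forall>i<\<zeta>. Aj i \<in> carrier_mat n n" and X: "X \<in> carrier_mat n n"
  shows "minner (C - adjA \<zeta> n Aj y) X = minner C X - (\<Sum>l<\<zeta>. y $ l * minner (Aj l) X)"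
proof -
  have D: "C - adjA \<zeta> n Aj y \<in> carrier_mat n n" using C unfolding adjA_def by auto
  have ent: "(C - adjA \<zeta> n Aj y) $$ (k, i) = C $$ (k, i) - (\<Sum>l<\<zeta>. y $ l * Aj l $$ (k, i))" if "k < n" "i < n" for k i
    using that C unfolding adjA_def by simp
  have "minner (C - adjA \<zeta> n Aj y) X = (\<Sum>i<n. \<Sum>k<n. X $$ (k, i) * (C $$ (k, i) - (\<Sum>l<\<zeta>. y $ l * Aj l $$ (k, i))))"
    unfolding minner_eq[OF D X] by (intro sum.cong refl) (simp add: ent)
  also have "\<dots> = minner C X - (\<Sum>i<n. \<Sum>k<n. \<Sum>l<\<zeta>. y $ l * (X $$ (k, i) * Aj l $$ (k, i)))"
    unfolding minner_eq[OF C X] by (simp add: algebra_simps sum_subtractf sum_distrib_left)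
  also have "(\<Sum>i<n. \<Sum>k<n. \<Sum>l<\<zeta>. y $ l * (X $$ (k, i) * Aj l $$ (k, i))) = (\<Sum>l<\<zeta>. y $ l * minner (Aj l) X)"
  proof -
    have "(\<Sum>i<n. \<Sum>k<n. \<Sum>l<\<zeta>. y $ l * (X $$ (k, i) * Aj l $$ (k, i))) = (\<Sum>i<n. \<Sum>l<\<zeta>. \<Sum>k<n. y $ l * (X $$ (k, i) * Aj l $$ (k, i)))"
      by (rule sum.cong[OF refl], rule sum.swap)
    also have "\<dots> = (\<Sum>l<\<zeta>. \<Sum>i<n. \<Sum>k<n. y $ l * (X $$ (k, i) * Aj l $$ (k, i)))" by (rule sum.swap)
    also have "\<dots> = (\<Sum>l<\<zeta>. y $ l * minner (Aj l) X)"
    proof (intro sum.cong refl)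
      fix l assume "l \<in> {..<\<zeta>}"
      then have "Aj l \<in> carrier_mat n n" using Aj by auto
      then show "(\<Sum>i<n. \<Sum>k<n. y $ l * (X $$ (k, i) * Aj l $$ (k, i))) = y $ l * minner (Aj l) X"
        by (simp add: minner_eq[OF _ X] sum_distrib_left)
    qed
    finally show ?thesis .
  qed
  finally show ?thesis .
qed

lemma bdsym_props: "X \<in> bdsym bs \<Longrightarrow> X \<in> carrier_mat (sum_list bs) (sum_list bs)
   \<and> (\<forall>i<sum_list bs. \<forall>k<sum_list bs. X $$ (i, k) = X $$ (k, i))"
  unfolding bdsym_def by (auto, metis carrier_matD index_transpose_mat(1))

lemma M_props:
  assumes C: "C \<in> bdsym bs" and Aj: "\<forall>i<\<zeta>. Aj i \<in> bdsym bs"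
  shows "C - adjA \<zeta> (sum_list bs) Aj y \<in> carrier_mat (sum_list bs) (sum_list bs)
     \<and> (\<forall>i<sum_list bs. \<forall>k<sum_list bs. (C - adjA \<zeta> (sum_list bs) Aj y) $$ (i, k) = (C - adjA \<zeta> (sum_list bs) Aj y) $$ (k, i))"
proof -
  have Cc: "C \<in> carrier_mat (sum_list bs) (sum_list bs)" and Cs: "\<forall>i<sum_list bs. \<forall>k<sum_list bs. C $$ (i, k) = C $$ (k, i)"
    using bdsym_props[OF C] by auto
  have As: "\<forall>l<\<zeta>. \<forall>i<sum_list bs. \<forall>k<sum_list bs. Aj l $$ (i, k) = Aj l $$ (k, i)"
    using bdsym_props Aj by blast
  show ?thesis
  proof
    show "C - adjA \<zeta> (sum_list bs) Aj y \<in> carrier_mat (sum_list bs) (sum_list bs)" using Cc unfolding adjA_def by auto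
    show "\<forall>i<sum_list bs. \<forall>k<sum_list bs. (C - adjA \<zeta> (sum_list bs) Aj y) $$ (i, k) = (C - adjA \<zeta> (sum_list bs) Aj y) $$ (k, i)"
    proof (intro allI impI)
      fix i k assume ik: "i < sum_list bs" "k < sum_list bs"
      have "(\<Sum>l<\<zeta>. y $ l * Aj l $$ (i, k)) = (\<Sum>l<\<zeta>. y $ l * Aj l $$ (k, i))"
        using As ik by (intro sum.cong) auto
      then show "(C - adjA \<zeta> (sum_list bs) Aj y) $$ (i, k) = (C - adjA \<zeta> (sum_list bs) Aj y) $$ (k, i)"
        using ik Cc Cs unfolding adjA_def by simp
    qed
  qed
qed

theorem lemma5:
  fixes p \<zeta> :: nat
    and bs :: "nat \<Rightarrow> nat list"
    and C :: "nat \<Rightarrow> real mat"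
    and A :: "nat \<Rightarrow> nat \<Rightarrow> real mat"
    and b :: "real vec"
    and a :: "nat \<Rightarrow> real"
  assumes blocks: "\<forall>j<p. bs j \<noteq> [] \<and> (\<forall>s\<in>set (bs j). 1 \<le> s)"
    and b_dim: "b \<in> carrier_vec \<zeta>"
    and C_in: "\<forall>j<p. C j \<in> bdsym (bs j)"
    and A_in: "\<forall>i<\<zeta>. \<forall>j<p. A i j \<in> bdsym (bs j)"
    and strong_duality:
      "(SUP y\<in>{y \<in> carrier_vec \<zeta>. \<forall>j<p. C j - adjA \<zeta> (sum_list (bs j)) (\<lambda>i. A i j) y \<in> bdpsd (bs j)}.
          ereal (b \<bullet> y))
       = (INF X\<in>{X. (\<forall>j<p. X j \<in> bdpsd (bs j)) \<and> (\<forall>i<\<zeta>. (\<Sum>j<p. minner (A i j) (X j)) = b $ i)}.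
          ereal (\<Sum>j<p. minner (C j) (X j)))"
    and tau_finite:
      "\<bar>INF X\<in>{X. (\<forall>j<p. X j \<in> bdpsd (bs j)) \<and> (\<forall>i<\<zeta>. (\<Sum>j<p. minner (A i j) (X j)) = b $ i)}.
          ereal (\<Sum>j<p. minner (C j) (X j))\<bar> \<noteq> \<infinity>"
    and a_pos: "\<forall>j<p. a j > 0"
    and const_trace:
      "\<forall>X. (\<forall>j<p. X j \<in> bdsym (bs j)) \<and> (\<forall>i<\<zeta>. (\<Sum>j<p. minner (A i j) (X j)) = b $ i)
           \<longrightarrow> (\<forall>j<p. mtrace (X j) = a j)"
  shows "(SUP y\<in>carrier_vec \<zeta>.
            ereal (b \<bullet> y + (\<Sum>j<p. a j * lambda_min (C j - adjA \<zeta> (sum_list (bs j)) (\<lambda>i. A i j) y))))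
         = (INF X\<in>{X. (\<forall>j<p. X j \<in> bdpsd (bs j)) \<and> (\<forall>i<\<zeta>. (\<Sum>j<p. minner (A i j) (X j)) = b $ i)}.
              ereal (\<Sum>j<p. minner (C j) (X j)))
       \<and> ((\<exists>y\<in>carrier_vec \<zeta>. (\<forall>j<p. C j - adjA \<zeta> (sum_list (bs j)) (\<lambda>i. A i j) y \<in> bdpsd (bs j))
             \<and> ereal (b \<bullet> y) = (SUP y\<in>{y \<in> carrier_vec \<zeta>. \<forall>j<p. C j - adjA \<zeta> (sum_list (bs j)) (\<lambda>i. A i j) y \<in> bdpsd (bs j)}.
                 ereal (b \<bullet> y)))
          \<longrightarrow> (\<exists>y\<in>carrier_vec \<zeta>.
                 ereal (b \<bullet> y + (\<Sum>j<p. a j * lambda_min (C j - adjA \<zeta> (sum_list (bs j)) (\<lambda>i. A i j) y)))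
                 = (SUP y\<in>carrier_vec \<zeta>.
                      ereal (b \<bullet> y + (\<Sum>j<p. a j * lambda_min (C j - adjA \<zeta> (sum_list (bs j)) (\<lambda>i. A i j) y))))))"
proof -
  define F where "F = {X. (\<forall>j<p. X j \<in> bdpsd (bs j)) \<and> (\<forall>i<\<zeta>. (\<Sum>j<p. minner (A i j) (X j)) = b $ i)}"
  define D where "D = {y \<in> carrier_vec \<zeta>. \<forall>j<p. C j - adjA \<zeta> (sum_list (bs j)) (\<lambda>i. A i j) y \<in> bdpsd (bs j)}"
  define \<psi> where "\<psi> = (\<lambda>y. b \<bullet> y + (\<Sum>j<p. a j * lambda_min (C j - adjA \<zeta> (sum_list (bs j)) (\<lambda>i. A i j) y)))"
  have npos: "sum_list (bs j) > 0" if jp: "j < p" for j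
  proof -
    obtain s r where sr: "bs j = s # r" using blocks jp by (cases "bs j") auto
    then have "s \<ge> 1" using blocks jp by auto
    then show ?thesis using sr by simp
  qed
  have Mp: "C j - adjA \<zeta> (sum_list (bs j)) (\<lambda>i. A i j) y \<in> carrier_mat (sum_list (bs j)) (sum_list (bs j))
     \<and> (\<forall>i<sum_list (bs j). \<forall>k<sum_list (bs j). (C j - adjA \<zeta> (sum_list (bs j)) (\<lambda>i. A i j) y) $$ (i, k)
           = (C j - adjA \<zeta> (sum_list (bs j)) (\<lambda>i. A i j) y) $$ (k, i))" if "j < p" for j y
    using M_props[of "C j" "bs j" \<zeta> "\<lambda>i. A i j" y] C_in A_in that by auto
  have fact1: "\<psi> y \<le> (\<Sum>j<p. minner (C j) (X j))" if y: "y \<in> carrier_vec \<zeta>" and X: "X \<in> F" for y X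
  proof -
    let ?M = "\<lambda>j. C j - adjA \<zeta> (sum_list (bs j)) (\<lambda>i. A i j) y"
    have j1: "minner (C j) (X j) = minner (?M j) (X j) + (\<Sum>l<\<zeta>. y $ l * minner (A l j) (X j))"
      and j2: "minner (?M j) (X j) \<ge> a j * lambda_min (?M j)" if j: "j < p" for j
    proof -
      have Xj: "X j \<in> bdpsd (bs j)" using X j unfolding F_def by auto
      then have Xc: "X j \<in> carrier_mat (sum_list (bs j)) (sum_list (bs j))"
        and Xs: "\<forall>i<sum_list (bs j). \<forall>k<sum_list (bs j). X j $$ (i, k) = X j $$ (k, i)"
        and Xp: "psd_mat (X j)" using bdsym_props[of "X j" "bs j"] unfolding bdpsd_def by auto
      have Cc: "C j \<in> carrier_mat (sum_list (bs j)) (sum_list (bs j))"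
        using bdsym_props[of "C j" "bs j"] C_in j by auto
      have Ac: "\<forall>i<\<zeta>. A i j \<in> carrier_mat (sum_list (bs j)) (sum_list (bs j))"
        using bdsym_props A_in j by blast
      show "minner (C j) (X j) = minner (?M j) (X j) + (\<Sum>l<\<zeta>. y $ l * minner (A l j) (X j))"
        using adj_minner[OF Cc Ac Xc, of y] by simp
      have tr: "mtrace (X j) = a j" using const_trace X j unfolding F_def bdpsd_def by blast
      show "minner (?M j) (X j) \<ge> a j * lambda_min (?M j)"
        using key_ineq[of "?M j" "sum_list (bs j)" "X j"] Mp[OF j, of y] npos[OF j] Xc Xs Xp tr
        by (simp add: mult.commute)
    qed
    have "(\<Sum>j<p. minner (C j) (X j)) = (\<Sum>j<p. minner (?M j) (X j)) + (\<Sum>j<p. \<Sum>l<\<zeta>. y $ l * minner (A l j) (X j))"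
      using j1 by (simp add: sum.distrib)
    also have "(\<Sum>j<p. \<Sum>l<\<zeta>. y $ l * minner (A l j) (X j)) = (\<Sum>l<\<zeta>. y $ l * (\<Sum>j<p. minner (A l j) (X j)))"
      by (subst sum.swap) (simp add: sum_distrib_left)
    also have "\<dots> = (\<Sum>l<\<zeta>. y $ l * b $ l)" using X unfolding F_def by simp
    also have "\<dots> = b \<bullet> y" using y by (simp add: scalar_prod_def atLeast0LessThan mult.commute)
    finally have "(\<Sum>j<p. minner (C j) (X j)) = (\<Sum>j<p. minner (?M j) (X j)) + b \<bullet> y" .
    moreover have "(\<Sum>j<p. minner (?M j) (X j)) \<ge> (\<Sum>j<p. a j * lambda_min (?M j))"
      using j2 by (intro sum_mono) auto
    ultimately show ?thesis unfolding \<psi>_def by simp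
  qed
  have fact2: "b \<bullet> y \<le> \<psi> y" if y: "y \<in> D" for y
  proof -
    have "a j * lambda_min (C j - adjA \<zeta> (sum_list (bs j)) (\<lambda>i. A i j) y) \<ge> 0" if j: "j < p" for j
    proof -
      have "psd_mat (C j - adjA \<zeta> (sum_list (bs j)) (\<lambda>i. A i j) y)" using y j unfolding D_def bdpsd_def by auto
      then have "lambda_min (C j - adjA \<zeta> (sum_list (bs j)) (\<lambda>i. A i j) y) \<ge> 0"
        using psd_lmin Mp[OF j, of y] npos[OF j] by blast
      then show ?thesis using a_pos j by (simp add: less_imp_le)
    qed
    then have "(\<Sum>j<p. a j * lambda_min (C j - adjA \<zeta> (sum_list (bs j)) (\<lambda>i. A i j) y)) \<ge> 0" by (intro sum_nonneg) auto
    then show ?thesis unfolding \<psi>_def by simp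
  qed
  have le1: "(SUP y\<in>carrier_vec \<zeta>. ereal (\<psi> y)) \<le> (INF X\<in>F. ereal (\<Sum>j<p. minner (C j) (X j)))"
    by (rule SUP_least, rule INF_greatest) (use fact1 in auto)
  have le2: "(SUP y\<in>D. ereal (b \<bullet> y)) \<le> (SUP y\<in>carrier_vec \<zeta>. ereal (\<psi> y))"
  proof (rule SUP_least)
    fix y assume y: "y \<in> D"
    then have "y \<in> carrier_vec \<zeta>" unfolding D_def by auto
    then show "ereal (b \<bullet> y) \<le> (SUP y\<in>carrier_vec \<zeta>. ereal (\<psi> y))"
      by (rule SUP_upper2) (use fact2[OF y] in auto)
  qed
  have sd: "(SUP y\<in>D. ereal (b \<bullet> y)) = (INF X\<in>F. ereal (\<Sum>j<p. minner (C j) (X j)))"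
    using strong_duality unfolding D_def F_def .
  have eq: "(SUP y\<in>carrier_vec \<zeta>. ereal (\<psi> y)) = (INF X\<in>F. ereal (\<Sum>j<p. minner (C j) (X j)))"
    using le1 le2 sd by (metis antisym)
  have part2: "\<exists>y\<in>carrier_vec \<zeta>. ereal (\<psi> y) = (SUP y\<in>carrier_vec \<zeta>. ereal (\<psi> y))"
    if ex: "\<exists>y\<in>carrier_vec \<zeta>. (\<forall>j<p. C j - adjA \<zeta> (sum_list (bs j)) (\<lambda>i. A i j) y \<in> bdpsd (bs j))
             \<and> ereal (b \<bullet> y) = (SUP y\<in>D. ereal (b \<bullet> y))"
  proof -
    obtain y where y: "y \<in> carrier_vec \<zeta>" and yD: "y \<in> D" and opt: "ereal (b \<bullet> y) = (SUP y\<in>D. ereal (b \<bullet> y))"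
      using ex unfolding D_def by auto
    have "ereal (\<psi> y) \<le> (SUP y\<in>carrier_vec \<zeta>. ereal (\<psi> y))" using y by (rule SUP_upper)
    moreover have "(SUP y\<in>carrier_vec \<zeta>. ereal (\<psi> y)) \<le> ereal (\<psi> y)"
    proof -
      have "(SUP y\<in>carrier_vec \<zeta>. ereal (\<psi> y)) = ereal (b \<bullet> y)" using eq sd opt by simp
      also have "\<dots> \<le> ereal (\<psi> y)" using fact2[OF yD] by simp
      finally show ?thesis .
    qed
    ultimately show ?thesis using y by (metis antisym)
  qed
  show ?thesis using eq part2 unfolding \<psi>_def F_def D_def by blast
qed

end
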